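(* Assume the standing hypotheses (H). Let $Z_3$ be a set of exactly $\lfloor 2k_3/3\rfloor$ parts of size $3$ and $Z_4$ a set of exactly $\max\{0,\frac{k_1-k_3+k_4+1}{3}\}$ parts of size $4$ (under (H) this number is a nonnegative integer at most $k_4$). Let $M$ be a merging of $G$, with $t_3$ the number of parts of size $3$ containing a pair of $M$, satisfying: (P1) $t_3\ge k_3/3$; (P2) every part of size $4$ contains at least one pair of $M$; (P3) for every part $A$ and distinct $x,y,z\in A^*$: $|L(x)\cup L(y)\cup L(z)|\ge n-t_3-k_4$; (P4) for every part $A$ of size $3$ containing no pair of $M$ and all $x,y\in A^*$ with $x\neq y$: $|L(x)\cup L(y)|\ge k+k_3+k_4$; (P5) for every $A\in Z_3$ and distinct $x,y\in A^*$: $|L(x)\cup L(y)|\ge k+t_3+k_4$; (P6) for every part $A$ of size $3$ and distinct $x,y\in A^*$: $|L(x)\cup L(y)|\ge k+\frac{k_3}{3}+k_4$; (P7) for every $A\in Z_4$ and distinct $x,y\in A^*$: $|L(x)\cup L(y)|\ge k+k_4$; (P8) the family $(L(w))_{w}$ indexed by the merged vertices $w$ has a system of distinct representatives. Then the family $(L(x))_{x\in V^*}$ of all lists after merging has a system of distinct representatives (and hence $G$ has an $L$-coloring).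
   Context: A list assignment $L$ assigns to each vertex $v$ a set $L(v)$ of colors; an $L$-coloring is a proper coloring $f$ with $f(v)\in L(v)$ for all $v$; $\mathrm{ch}$ denotes choice number and $\chi$ chromatic number. A part of a complete multipartite graph is one of its maximal stable sets. Standing hypotheses (H): $k\ge1$ and $n\ge 2k+2$ are integers; $G$ is a complete $k$-partite graph (exactly $k$ nonempty parts) on $n$ vertices; $L$ is a list assignment for $G$ with $|L(v)|\ge\lceil (n+k-1)/3\rceil$ for every vertex $v$; $G$ has no $L$-coloring; $\left|\bigcup_{v\in V(G)}L(v)\right|\le n-1$; and every graph $H$ with fewer than $n$ vertices satisfies $\mathrm{ch}(H)\le\max\{\chi(H),\lceil(|V(H)|+\chi(H)-1)/3\rceil\}$. For $i\in\{1,2,3,4\}$, $k_i$ denotes the number of parts of $G$ of size $i$. A merging $M$ of $G$ is a collection of pairwise disjoint $2$-element sets of vertices, each contained in a single part. Merging replaces each pair $\{u,v\}\in M$ by a single new (merged) vertex $w$ with list $L(w)=L(u)\cap L(v)$; vertices in no pair of $M$ remain (unmerged) with their original lists. $V^*$ is the resulting vertex set, and for a part $A$, $A^*$ is the set of vertices of $V^*$ arising from $A$ (merged vertices from pairs in $A$ together with unmerged vertices of $A$). A system of distinct representatives (SDR) of a family $(X_i)_{i\in I}$ of sets is a choice of elements $x_i\in X_i$ that are pairwise distinct. *)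

theory Defs
  imports Complex_Main "HOL-Library.Disjoint_Sets"
begin

definition simple_graph :: "'v set \<Rightarrow> ('v \<Rightarrow> 'v \<Rightarrow> bool) \<Rightarrow> bool" where
  "simple_graph V E \<longleftrightarrow> finite V \<and> (\<forall>u v. E u v \<longrightarrow> u \<in> V \<and> v \<in> V \<and> u \<noteq> v)
     \<and> (\<forall>u v. E u v \<longrightarrow> E v u)"

definition proper_coloring :: "'v set \<Rightarrow> ('v \<Rightarrow> 'v \<Rightarrow> bool) \<Rightarrow> ('v \<Rightarrow> 'c) \<Rightarrow> bool" where
  "proper_coloring V E f \<longleftrightarrow> (\<forall>u\<in>V. \<forall>v\<in>V. E u v \<longrightarrow> f u \<noteq> f v)"

definition L_coloring :: "'v set \<Rightarrow> ('v \<Rightarrow> 'v \<Rightarrow> bool) \<Rightarrow> ('v \<Rightarrow> 'c set) \<Rightarrow> ('v \<Rightarrow> 'c) \<Rightarrow> bool" where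
  "L_coloring V E L f \<longleftrightarrow> proper_coloring V E f \<and> (\<forall>v\<in>V. f v \<in> L v)"

definition chromatic_number :: "'v set \<Rightarrow> ('v \<Rightarrow> 'v \<Rightarrow> bool) \<Rightarrow> nat" where
  "chromatic_number V E =
     (LEAST k. \<exists>f :: 'v \<Rightarrow> nat. proper_coloring V E f \<and> f ` V \<subseteq> {..<k})"

text \<open>k-choosable: every assignment of lists of size at least k admits an L-coloring
  (colors are natural numbers; lists are finite, so this is no loss of generality).\<close>
definition choosable :: "'v set \<Rightarrow> ('v \<Rightarrow> 'v \<Rightarrow> bool) \<Rightarrow> nat \<Rightarrow> bool" where
  "choosable V E k \<longleftrightarrow>
     (\<forall>L :: 'v \<Rightarrow> nat set. (\<forall>v\<in>V. card (L v) \<ge> k) \<longrightarrow> (\<exists>f. L_coloring V E L f))"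

definition choice_number :: "'v set \<Rightarrow> ('v \<Rightarrow> 'v \<Rightarrow> bool) \<Rightarrow> nat" where
  "choice_number V E = (LEAST k. choosable V E k)"

definition complete_multipartite ::
  "'v set \<Rightarrow> ('v \<Rightarrow> 'v \<Rightarrow> bool) \<Rightarrow> 'v set set \<Rightarrow> bool" where
  "complete_multipartite V E P \<longleftrightarrow>
     finite V \<and> partition_on V P \<and>
     (\<forall>u v. E u v \<longleftrightarrow> (u \<in> V \<and> v \<in> V \<and> \<not> (\<exists>A\<in>P. u \<in> A \<and> v \<in> A)))"

definition num_parts :: "'v set set \<Rightarrow> nat \<Rightarrow> nat" where
  "num_parts P i = card {A \<in> P. card A = i}"

definition merging :: "'v set set \<Rightarrow> 'v set set \<Rightarrow> bool" where
  "merging P M \<longleftrightarrow>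
     (\<forall>p\<in>M. card p = 2 \<and> (\<exists>A\<in>P. p \<subseteq> A)) \<and>
     (\<forall>p\<in>M. \<forall>q\<in>M. p \<noteq> q \<longrightarrow> p \<inter> q = {})"

text \<open>Vertices after merging: a merged vertex is represented by its pair,
  an unmerged vertex v by the singleton {v}.\<close>
definition merged_vertices :: "'v set \<Rightarrow> 'v set set \<Rightarrow> 'v set set" where
  "merged_vertices V M = M \<union> {{v} | v. v \<in> V \<and> v \<notin> \<Union>M}"

definition merged_list :: "('v \<Rightarrow> 'c set) \<Rightarrow> 'v set \<Rightarrow> 'c set" where
  "merged_list L x = (\<Inter>v\<in>x. L v)"

definition part_star :: "'v set \<Rightarrow> 'v set set \<Rightarrow> 'v set \<Rightarrow> 'v set set" where
  "part_star V M A = {x \<in> merged_vertices V M. x \<subseteq> A}"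

definition has_SDR :: "'i set \<Rightarrow> ('i \<Rightarrow> 'c set) \<Rightarrow> bool" where
  "has_SDR I X \<longleftrightarrow> (\<exists>f. inj_on f I \<and> (\<forall>i\<in>I. f i \<in> X i))"

end

theory Submission
  imports Defs
begin


lemma hall:
  fixes X :: "'i \<Rightarrow> 'c set"
  assumes "finite I" "\<forall>i\<in>I. finite (X i)" "\<forall>J\<subseteq>I. card J \<le> card (\<Union>(X ` J))"
  shows "\<exists>f. inj_on f I \<and> (\<forall>i\<in>I. f i \<in> X i)"
  using assms
proof (induction "card I" arbitrary: I X rule: less_induct)
  case less
  show ?case
  proof (cases "I = {}")
    case True then show ?thesis by auto
  next
    case False
    show ?thesis
    proof (cases "\<exists>J. J \<subseteq> I \<and> J \<noteq> {} \<and> J \<noteq> I \<and> card (\<Union>(X ` J)) = card J")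
      case True
      then obtain J where J: "J \<subseteq> I" "J \<noteq> {}" "J \<noteq> I" "card (\<Union>(X ` J)) = card J" by blast
      define U where "U = \<Union>(X ` J)"
      have fJ: "finite J" using J less(2) finite_subset by blast
      have cJ: "card J < card I" using J less(2) psubset_card_mono by blast
      obtain f1 where f1: "inj_on f1 J" "\<forall>i\<in>J. f1 i \<in> X i"
      proof -
        have "\<forall>i\<in>J. finite (X i)" using less(3) J(1) by auto
        moreover have "\<forall>K\<subseteq>J. card K \<le> card (\<Union>(X ` K))" using less(4) J(1) by auto
        ultimately show ?thesis using less(1)[OF cJ fJ] that by blast
      qed
      define Y where "Y i = X i - U" for i
      have cIJ: "card (I - J) < card I"
      proof -
        have "I - J \<subset> I" using J(1,2) by blast
        then show ?thesis using less(2) by (simp add: psubset_card_mono)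
      qed
      have fU: "finite U" unfolding U_def using fJ less(3) J(1) by auto
      have hY: "\<forall>K\<subseteq>I - J. card K \<le> card (\<Union>(Y ` K))"
      proof (intro allI impI)
        fix K assume K: "K \<subseteq> I - J"
        define W where "W = \<Union>(X ` (K \<union> J))"
        have fK: "finite K" using K less(2) finite_subset by blast
        have fW: "finite W" unfolding W_def using fK fJ K J(1) less(3) by auto
        have UW: "U \<subseteq> W" unfolding U_def W_def by auto
        have eq: "\<Union>(Y ` K) = W - U" unfolding Y_def W_def U_def by auto
        have "K \<union> J \<subseteq> I" using K J(1) by auto
        then have "card (K \<union> J) \<le> card W" unfolding W_def using less(4) by blast
        moreover have "card (K \<union> J) = card K + card J"
          using K fK fJ by (subst card_Un_disjoint) auto
        moreover have "card (W - U) = card W - card U" using UW fU by (simp add: card_Diff_subset)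
        ultimately show "card K \<le> card (\<Union>(Y ` K))" using eq J(4) U_def by simp
      qed
      obtain f2 where f2: "inj_on f2 (I - J)" "\<forall>i\<in>I - J. f2 i \<in> Y i"
        using less(1)[OF cIJ _ _ hY] less(2,3) unfolding Y_def by auto
      define f where "f i = (if i \<in> J then f1 i else f2 i)" for i
      have "inj_on f I"
        unfolding inj_on_def
      proof (intro ballI impI)
        fix i j assume ij: "i \<in> I" "j \<in> I" "f i = f j"
        show "i = j"
        proof (cases "i \<in> J"; cases "j \<in> J")
          assume "i \<in> J" "j \<in> J" then show ?thesis using ij f1 unfolding f_def inj_on_def by auto
        next
          assume a: "i \<in> J" "j \<notin> J"
          then have "f i \<in> U" using f1 unfolding f_def U_def by auto
          moreover have "f j \<notin> U"
          proof -
            have "j \<in> I - J" using a ij by auto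
            then show ?thesis using f2(2) a unfolding f_def Y_def by auto
          qed
          ultimately show ?thesis using ij by simp
        next
          assume a: "i \<notin> J" "j \<in> J"
          then have "f j \<in> U" using f1 unfolding f_def U_def by auto
          moreover have "f i \<notin> U"
          proof -
            have "i \<in> I - J" using a ij by auto
            then show ?thesis using f2(2) a unfolding f_def Y_def by auto
          qed
          ultimately show ?thesis using ij by simp
        next
          assume "i \<notin> J" "j \<notin> J" then show ?thesis using ij f2 unfolding f_def inj_on_def by auto
        qed
      qed
      moreover have "\<forall>i\<in>I. f i \<in> X i" using f1 f2 unfolding f_def Y_def by auto
      ultimately show ?thesis by blast
    next
      case False
      note nJ = False
      obtain i0 where i0: "i0 \<in> I" using \<open>I \<noteq> {}\<close> by blast
      have "card {i0} \<le> card (\<Union>(X ` {i0}))" using less(4) i0 by blast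
      then have "card {i0} \<le> card (X i0)" by simp
      then have "X i0 \<noteq> {}" by auto
      then obtain x where x: "x \<in> X i0" by blast
      define Y where "Y i = X i - {x}" for i
      have cI: "card (I - {i0}) < card I" using i0 less(2) by (meson card_Diff1_less)
      have hY: "\<forall>K\<subseteq>I - {i0}. card K \<le> card (\<Union>(Y ` K))"
      proof (intro allI impI)
        fix K assume K: "K \<subseteq> I - {i0}"
        show "card K \<le> card (\<Union>(Y ` K))"
        proof (cases "K = {}")
          case True then show ?thesis by simp
        next
          case False
          have fK: "finite K" using K less(2) finite_subset by blast
          have fU: "finite (\<Union>(X ` K))" using fK K less(3) by auto
          have KI: "K \<subseteq> I" "K \<noteq> I" using K i0 by auto
          have "card K \<le> card (\<Union>(X ` K))" using less(4) KI(1) by blast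
          moreover have "card (\<Union>(X ` K)) \<noteq> card K"
          proof
            assume "card (\<Union>(X ` K)) = card K"
            then have "\<exists>J. J \<subseteq> I \<and> J \<noteq> {} \<and> J \<noteq> I \<and> card (\<Union>(X ` J)) = card J"
              using KI False by blast
            then show False using nJ by blast
          qed
          ultimately have "card K + 1 \<le> card (\<Union>(X ` K))" by simp
          moreover have "\<Union>(Y ` K) = \<Union>(X ` K) - {x}" unfolding Y_def by auto
          moreover have "card (\<Union>(X ` K) - {x}) \<ge> card (\<Union>(X ` K)) - 1"
            using fU by (simp add: card_Diff_singleton_if)
          ultimately show ?thesis by simp
        qed
      qed
      obtain f2 where f2: "inj_on f2 (I - {i0})" "\<forall>i\<in>I - {i0}. f2 i \<in> Y i"
      proof -
        have "finite (I - {i0})" using less(2) by blast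
        moreover have "\<forall>i\<in>I - {i0}. finite (Y i)" using less(3) unfolding Y_def by blast
        ultimately show ?thesis using less(1)[OF cI _ _ hY] that by blast
      qed
      define f where "f = f2(i0 := x)"
      have "inj_on f I"
      proof -
        have "inj_on f (I - {i0})" using f2(1) unfolding f_def inj_on_def by auto
        moreover have "f i0 \<notin> f ` (I - {i0})" using f2(2) unfolding f_def Y_def by auto
        ultimately have "inj_on f (insert i0 (I - {i0}))" unfolding inj_on_insert by simp
        moreover have "insert i0 (I - {i0}) = I" using i0 by blast
        ultimately show ?thesis by simp
      qed
      moreover have "\<forall>i\<in>I. f i \<in> X i" using f2 x unfolding f_def Y_def by auto
      ultimately show ?thesis by blast
    qed
  qed
qed




lemma inj_choice:
  assumes "finite W" "\<forall>v\<in>W. card W \<le> card (L v)"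
  shows "\<exists>f. inj_on f W \<and> (\<forall>v\<in>W. f v \<in> L v)"
proof (cases "W = {}")
  case True then show ?thesis by auto
next
  case False
  have fin: "\<forall>v\<in>W. finite (L v)"
  proof
    fix v assume v: "v \<in> W"
    then have "card W > 0" using assms(1) False by (simp add: card_gt_0_iff)
    then have "card (L v) > 0" using assms(2) v by fastforce
    then show "finite (L v)" using card_gt_0_iff by blast
  qed
  have "\<forall>J\<subseteq>W. card J \<le> card (\<Union>(L ` J))"
  proof (intro allI impI)
    fix J assume J: "J \<subseteq> W"
    show "card J \<le> card (\<Union>(L ` J))"
    proof (cases "J = {}")
      case True then show ?thesis by simp
    next
      case False
      then obtain v where v: "v \<in> J" by blast
      have fJ: "finite J" using J assms(1) finite_subset by blast
      have "finite (\<Union>(L ` J))" using fin J fJ by blast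
      then have "card (L v) \<le> card (\<Union>(L ` J))" using v by (meson UN_upper card_mono)
      moreover have "card J \<le> card W" using J assms(1) card_mono by blast
      ultimately show ?thesis using assms(2) v J by fastforce
    qed
  qed
  then show ?thesis using hall[OF assms(1) fin] by blast
qed

lemma choosable_card:
  assumes "simple_graph W F"
  shows "choosable W F (card W)"
  unfolding choosable_def
proof (intro allI impI)
  fix L :: "'a \<Rightarrow> nat set"
  assume "\<forall>v\<in>W. card W \<le> card (L v)"
  moreover have "finite W" using assms unfolding simple_graph_def by blast
  ultimately obtain f where f: "inj_on f W" "\<forall>v\<in>W. f v \<in> L v" using inj_choice by blast
  have "proper_coloring W F f"
    unfolding proper_coloring_def
  proof (intro ballI impI)
    fix u v assume "u \<in> W" "v \<in> W" "F u v"
    then have "u \<noteq> v" using assms unfolding simple_graph_def by blast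
    then show "f u \<noteq> f v" using f(1) \<open>u \<in> W\<close> \<open>v \<in> W\<close> unfolding inj_on_def by blast
  qed
  then show "\<exists>f. L_coloring W F L f" using f unfolding L_coloring_def by blast
qed

lemma choosable_mono:
  "choosable W F a \<Longrightarrow> a \<le> b \<Longrightarrow> choosable W F b"
  unfolding choosable_def by (meson order_trans)




lemma cm_facts:
  assumes G: "complete_multipartite V E P"
  shows "finite V" "\<Union>P = V" "\<And>A B. A \<in> P \<Longrightarrow> B \<in> P \<Longrightarrow> A \<noteq> B \<Longrightarrow> A \<inter> B = {}"
    "{} \<notin> P" "\<And>A. A \<in> P \<Longrightarrow> A \<subseteq> V" "finite P"
    "\<And>u v. E u v \<longleftrightarrow> (u \<in> V \<and> v \<in> V \<and> \<not> (\<exists>A\<in>P. u \<in> A \<and> v \<in> A))"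
proof -
  have fV: "finite V" and pp: "partition_on V P"
    and EE: "\<And>u v. E u v \<longleftrightarrow> (u \<in> V \<and> v \<in> V \<and> \<not> (\<exists>A\<in>P. u \<in> A \<and> v \<in> A))"
    using G unfolding complete_multipartite_def by auto
  show "finite V" by (fact fV)
  show "\<Union>P = V" using pp unfolding partition_on_def by blast
  show "\<And>A B. A \<in> P \<Longrightarrow> B \<in> P \<Longrightarrow> A \<noteq> B \<Longrightarrow> A \<inter> B = {}"
    using pp unfolding partition_on_def disjoint_def by blast
  show "{} \<notin> P" using pp unfolding partition_on_def by blast
  show sub: "\<And>A. A \<in> P \<Longrightarrow> A \<subseteq> V" using pp unfolding partition_on_def by blast
  show "finite P" using fV sub by (meson Pow_iff finite_Pow_iff rev_finite_subset subsetI)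
  show "\<And>u v. E u v \<longleftrightarrow> (u \<in> V \<and> v \<in> V \<and> \<not> (\<exists>A\<in>P. u \<in> A \<and> v \<in> A))" by (fact EE)
qed

lemma reduction:
  fixes V :: "'v set" and E :: "'v \<Rightarrow> 'v \<Rightarrow> bool" and P :: "'v set set"
    and L :: "'v \<Rightarrow> 'c set" and k n :: nat
  assumes n_ge: "n \<ge> 2 * k + 2"
    and G: "complete_multipartite V E P"
    and k_parts: "card P = k"
    and n_def: "card V = n"
    and list_size: "\<forall>v\<in>V. int (card (L v)) \<ge> ceiling ((real n + real k - 1) / 3)"
    and no_col: "\<not> (\<exists>f. L_coloring V E L f)"
    and minimal: "\<forall>(W :: nat set) (F :: nat \<Rightarrow> nat \<Rightarrow> bool).
        simple_graph W F \<and> card W < n \<longrightarrow>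
        int (choice_number W F) \<le> max (int (chromatic_number W F))
          (ceiling ((real (card W) + real (chromatic_number W F) - 1) / 3))"
    and A: "A \<in> P" "T \<subseteq> A" "T \<noteq> {}" "\<forall>v\<in>T. c \<in> L v"
    and big: "card T \<ge> 3 \<or> (T = A \<and> card T \<ge> 2)"
  shows False
proof -
  note cm = cm_facts[OF G]
  define m where "m = ceiling ((real n + real k - 1) / 3)"
  have mge: "real_of_int m \<ge> (real n + real k - 1) / 3" unfolding m_def by (meson ceiling_correct)
  have mk: "m \<ge> int k + 1"
  proof -
    have "(real n + real k - 1) / 3 > real k" using n_ge by simp
    then have "real_of_int m > real k" using mge by linarith
    then show ?thesis by linarith
  qed
  have TV: "T \<subseteq> V" using A cm(5) by blast
  define V' where "V' = V - T"
  have fV': "finite V'" using cm(1) unfolding V'_def by blast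
  have cV': "card V' = n - card T" unfolding V'_def using TV cm(1) n_def by (simp add: card_Diff_subset finite_subset)
  have fT: "finite T" using TV cm(1) finite_subset by blast
  have cT: "card T > 0" using fT A(3) by (simp add: card_gt_0_iff)
  have Tn: "card T \<le> n" using TV cm(1) n_def card_mono by blast
  obtain g :: "'v \<Rightarrow> nat" and N where g: "g ` V' = {i. i < N}" "inj_on g V'"
    using finite_imp_inj_to_nat_seg[OF fV'] by blast
  define W where "W = g ` V'"
  define F where "F i j = (\<exists>u\<in>V'. \<exists>v\<in>V'. i = g u \<and> j = g v \<and> E u v)" for i j
  have Eneq: "E u v \<Longrightarrow> u \<noteq> v" for u v
  proof
    assume "E u v" "u = v"
    then have "u \<in> V" using cm(7) by blast
    then obtain B where "B \<in> P" "u \<in> B" using cm(2) by blast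
    then show False using \<open>E u v\<close> \<open>u = v\<close> cm(7) by blast
  qed
  have Esym: "E u v \<Longrightarrow> E v u" for u v using cm(7) by blast
  have sg: "simple_graph W F"
    unfolding simple_graph_def
  proof (intro conjI allI impI)
    show "finite W" unfolding W_def using fV' by blast
  next
    fix i j assume "F i j"
    then obtain u v where uv: "u \<in> V'" "v \<in> V'" "i = g u" "j = g v" "E u v" unfolding F_def by blast
    show "i \<in> W" "j \<in> W" using uv unfolding W_def by auto
    have "u \<noteq> v" using Eneq uv(5) by blast
    then show "i \<noteq> j" using g(2) uv unfolding inj_on_def by blast
  next
    fix i j assume "F i j"
    then show "F j i" unfolding F_def using Esym by blast
  qed
  have cW: "card W = n - card T" unfolding W_def using g(2) cV' by (simp add: card_image)
  have cWn: "card W < n" using cW cT Tn by linarith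
  define Q where "Q = {B \<in> P. \<not> B \<subseteq> T}"
  have fQ: "finite Q" unfolding Q_def using cm(6) by simp
  have cQ: "card Q \<le> k"
  proof -
    have "Q \<subseteq> P" unfolding Q_def by blast
    then show ?thesis using card_mono[OF cm(6)] k_parts by blast
  qed
  have cQ2: "T = A \<Longrightarrow> card Q + 1 \<le> k"
  proof -
    assume TA: "T = A"
    have "Q \<subseteq> P - {A}" unfolding Q_def using TA by auto
    then have "card Q \<le> card (P - {A})" using cm(6) by (simp add: card_mono)
    also have "\<dots> = k - 1" using A(1) k_parts cm(6) by (simp add: card_Diff_singleton)
    finally have "card Q \<le> k - 1" .
    moreover have "k > 0" using A(1) k_parts cm(6) card_gt_0_iff by blast
    ultimately show ?thesis by linarith
  qed
  obtain \<iota> :: "'v set \<Rightarrow> nat" and NQ where io: "\<iota> ` Q = {i. i < NQ}" "inj_on \<iota> Q"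
    using finite_imp_inj_to_nat_seg[OF fQ] by blast
  have NQ: "NQ = card Q"
  proof -
    have "card (\<iota> ` Q) = card Q" using io(2) by (rule card_image)
    then show ?thesis using io(1) by simp
  qed
  define pt where "pt v = (SOME B. B \<in> P \<and> v \<in> B)" for v
  have pt: "v \<in> V \<Longrightarrow> pt v \<in> P \<and> v \<in> pt v" for v
  proof -
    assume "v \<in> V"
    then have "\<exists>B. B \<in> P \<and> v \<in> B" using cm(2) by blast
    then show ?thesis unfolding pt_def by (rule someI_ex)
  qed
  define h where "h i = \<iota> (pt (inv_into V' g i))" for i
  have hV': "v \<in> V' \<Longrightarrow> h (g v) = \<iota> (pt v)" for v unfolding h_def using g(2) by simp
  have ptQ: "v \<in> V' \<Longrightarrow> pt v \<in> Q" for v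
    using pt[of v] unfolding Q_def V'_def by auto
  have hprop: "proper_coloring W F h"
    unfolding proper_coloring_def
  proof (intro ballI impI)
    fix i j assume "i \<in> W" "j \<in> W" "F i j"
    then obtain u v where uv: "u \<in> V'" "v \<in> V'" "i = g u" "j = g v" "E u v" unfolding F_def by blast
    have "pt u \<noteq> pt v"
    proof
      assume "pt u = pt v"
      then have "\<exists>B\<in>P. u \<in> B \<and> v \<in> B" using pt[of u] pt[of v] uv unfolding V'_def by auto
      then show False using uv(5) cm(7) by blast
    qed
    then have "\<iota> (pt u) \<noteq> \<iota> (pt v)" using io(2) ptQ uv(1,2) unfolding inj_on_def by blast
    then show "h i \<noteq> h j" using hV' uv by simp
  qed
  have hrange: "h ` W \<subseteq> {..<card Q}"
  proof
    fix y assume "y \<in> h ` W"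
    then obtain v where v: "v \<in> V'" "y = h (g v)" unfolding W_def by blast
    then have "y = \<iota> (pt v)" using hV' by simp
    then have "y \<in> \<iota> ` Q" using ptQ v(1) by blast
    then show "y \<in> {..<card Q}" using io(1) NQ by auto
  qed
  define \<chi> where "\<chi> = chromatic_number W F"
  have chi: "\<chi> \<le> card Q"
    unfolding \<chi>_def chromatic_number_def
    by (rule Least_le) (use hprop hrange in blast)
  define ch where "ch = choice_number W F"
  have chb: "int ch \<le> max (int \<chi>) (ceiling ((real (card W) + real \<chi> - 1) / 3))"
    using minimal sg cWn unfolding ch_def \<chi>_def by blast
  have bnd1: "int \<chi> \<le> m - 1" using chi cQ mk by linarith
  have "card W + \<chi> + 3 \<le> n + k"
    using big
  proof
    assume "card T \<ge> 3" then show ?thesis using cW chi cQ Tn by linarith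
  next
    assume "T = A \<and> card T \<ge> 2" then show ?thesis using cW chi cQ2 Tn by fastforce
  qed
  then have "real (card W) + real \<chi> + 3 \<le> real n + real k" by linarith
  then have "(real (card W) + real \<chi> - 1) / 3 \<le> real_of_int (m - 1)" using mge by simp
  then have bnd2: "ceiling ((real (card W) + real \<chi> - 1) / 3) \<le> m - 1" by (subst ceiling_le_iff)
  have chm: "int ch \<le> m - 1" using chb bnd1 bnd2 by linarith
  have "choosable W F (card W)" using choosable_card[OF sg] .
  then have "choosable W F ch" unfolding ch_def choice_number_def by (rule LeastI)
  moreover have "ch \<le> nat (m - 1)" using chm by linarith
  ultimately have chs: "choosable W F (nat (m - 1))" by (rule choosable_mono)
  define C where "C = (\<Union>v\<in>V. L v)"
  have finL: "v \<in> V \<Longrightarrow> finite (L v)" for v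
  proof -
    assume "v \<in> V"
    then have "int (card (L v)) \<ge> m" using list_size unfolding m_def by blast
    then have "card (L v) > 0" using mk by linarith
    then show ?thesis using card_gt_0_iff by blast
  qed
  have fC: "finite C" unfolding C_def using cm(1) finL by blast
  obtain enc :: "'c \<Rightarrow> nat" and NC where enc: "enc ` C = {i. i < NC}" "inj_on enc C"
    using finite_imp_inj_to_nat_seg[OF fC] by blast
  define L2 where "L2 i = enc ` (L (inv_into V' g i) - {c})" for i
  have L2g: "v \<in> V' \<Longrightarrow> L2 (g v) = enc ` (L v - {c})" for v unfolding L2_def using g(2) by simp
  have L2card: "\<forall>i\<in>W. nat (m - 1) \<le> card (L2 i)"
  proof
    fix i assume "i \<in> W"
    then obtain v where v: "v \<in> V'" "i = g v" unfolding W_def by blast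
    have vV: "v \<in> V" using v(1) unfolding V'_def by blast
    have "L v - {c} \<subseteq> C" unfolding C_def using vV by blast
    then have "inj_on enc (L v - {c})" using enc(2) inj_on_subset by blast
    then have "card (L2 i) = card (L v - {c})" using L2g v by (simp add: card_image)
    moreover have "card (L v - {c}) \<ge> card (L v) - 1" by (simp add: card_Diff_singleton_if)
    moreover have "int (card (L v)) \<ge> m" using list_size vV unfolding m_def by blast
    ultimately show "nat (m - 1) \<le> card (L2 i)" by linarith
  qed
  obtain f where f: "L_coloring W F L2 f" using chs L2card unfolding choosable_def by blast
  define col where "col v = (if v \<in> T then c else inv_into C enc (f (g v)))" for v
  have colV': "v \<in> V' \<Longrightarrow> col v \<in> L v \<and> col v \<noteq> c \<and> f (g v) = enc (col v)" for v
  proof -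
    assume v: "v \<in> V'"
    have "g v \<in> W" unfolding W_def using v by blast
    then have "f (g v) \<in> L2 (g v)" using f unfolding L_coloring_def by blast
    then obtain y where y: "y \<in> L v - {c}" "f (g v) = enc y" using L2g v by blast
    have "y \<in> C" unfolding C_def using y v unfolding V'_def by blast
    then have "inv_into C enc (f (g v)) = y" using y(2) enc(2) by simp
    moreover have "v \<notin> T" using v unfolding V'_def by blast
    ultimately show ?thesis using y unfolding col_def by simp
  qed
  have "L_coloring V E L col"
    unfolding L_coloring_def proper_coloring_def
  proof (intro conjI ballI impI)
    fix v assume v: "v \<in> V"
    show "col v \<in> L v"
    proof (cases "v \<in> T")
      case True then show ?thesis using A(4) unfolding col_def by simp
    next
      case False then show ?thesis using colV'[of v] v unfolding V'_def by blast
    qed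
  next
    fix u v assume uv: "u \<in> V" "v \<in> V" "E u v"
    show "col u \<noteq> col v"
    proof (cases "u \<in> T"; cases "v \<in> T")
      assume "u \<in> T" "v \<in> T"
      then have False using uv(3) cm(7) A(1,2) by blast
      then show ?thesis by blast
    next
      assume a: "u \<in> T" "v \<notin> T"
      then show ?thesis using colV'[of v] uv unfolding col_def V'_def by auto
    next
      assume a: "u \<notin> T" "v \<in> T"
      then show ?thesis using colV'[of u] uv unfolding col_def V'_def by auto
    next
      assume a: "u \<notin> T" "v \<notin> T"
      then have u': "u \<in> V'" and v': "v \<in> V'" using uv unfolding V'_def by auto
      have "F (g u) (g v)" unfolding F_def using u' v' uv(3) by blast
      moreover have "g u \<in> W" "g v \<in> W" unfolding W_def using u' v' by auto
      ultimately have "f (g u) \<noteq> f (g v)" using f unfolding L_coloring_def proper_coloring_def by blast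
      then show ?thesis using colV'[OF u'] colV'[OF v'] by auto
    qed
  qed
  then show False using no_col by blast
qed




locale Hyp =
  fixes V :: "'v set" and E :: "'v \<Rightarrow> 'v \<Rightarrow> bool" and P :: "'v set set"
    and L :: "'v \<Rightarrow> 'c set" and k n :: nat
  assumes k_pos: "k \<ge> 1"
    and n_ge: "n \<ge> 2 * k + 2"
    and G: "complete_multipartite V E P"
    and k_parts: "card P = k"
    and n_def: "card V = n"
    and list_size: "\<forall>v\<in>V. int (card (L v)) \<ge> ceiling ((real n + real k - 1) / 3)"
    and no_col: "\<not> (\<exists>f. L_coloring V E L f)"
    and few_colors: "card (\<Union>v\<in>V. L v) \<le> n - 1"
    and minimal: "\<forall>(W :: nat set) (F :: nat \<Rightarrow> nat \<Rightarrow> bool).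
        simple_graph W F \<and> card W < n \<longrightarrow>
        int (choice_number W F) \<le> max (int (chromatic_number W F))
          (ceiling ((real (card W) + real (chromatic_number W F) - 1) / 3))"
begin

lemmas cm = cm_facts[OF G]

lemma red: "A \<in> P \<Longrightarrow> T \<subseteq> A \<Longrightarrow> T \<noteq> {} \<Longrightarrow> \<forall>v\<in>T. c \<in> L v \<Longrightarrow>
  card T \<ge> 3 \<or> (T = A \<and> card T \<ge> 2) \<Longrightarrow> False"
  using reduction[OF n_ge G k_parts n_def list_size no_col minimal] by blast

lemma list3: "v \<in> V \<Longrightarrow> n + k \<le> 3 * card (L v) + 1"
proof -
  assume "v \<in> V"
  then have "int (card (L v)) \<ge> ceiling ((real n + real k - 1) / 3)" using list_size by blast
  moreover have "ceiling ((real n + real k - 1) / 3) \<ge> (real n + real k - 1) / 3" by (meson ceiling_correct)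
  ultimately have "real (card (L v)) \<ge> (real n + real k - 1) / 3" by linarith
  then have "real (n + k) \<le> real (3 * card (L v) + 1)" by simp
  then show ?thesis by (simp only: of_nat_le_iff)
qed

lemma finL: "v \<in> V \<Longrightarrow> finite (L v)"
proof -
  assume "v \<in> V"
  then have "card (L v) > 0" using list3 n_ge by fastforce
  then show ?thesis using card_gt_0_iff by blast
qed

lemma finC: "finite (\<Union>v\<in>V. L v)" using finL cm(1) by blast

lemma color_le2: "A \<in> P \<Longrightarrow> card {v\<in>A. c \<in> L v} \<le> 2"
proof (rule ccontr)
  assume A: "A \<in> P" "\<not> card {v\<in>A. c \<in> L v} \<le> 2"
  have "{v\<in>A. c \<in> L v} \<noteq> {}"
  proof
    assume e: "{v\<in>A. c \<in> L v} = {}"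
    have "card {v\<in>A. c \<in> L v} = 0" by (simp only: e card.empty)
    then show False using A(2) by linarith
  qed
  moreover have "{v\<in>A. c \<in> L v} \<subseteq> A" "\<forall>v\<in>{v\<in>A. c \<in> L v}. c \<in> L v" by auto
  moreover have "card {v\<in>A. c \<in> L v} \<ge> 3" using A(2) by linarith
  ultimately show False using red[OF A(1), of "{v\<in>A. c \<in> L v}" c] by blast
qed

lemma size2_disj: "A \<in> P \<Longrightarrow> card A = 2 \<Longrightarrow> u \<in> A \<Longrightarrow> v \<in> A \<Longrightarrow> u \<noteq> v \<Longrightarrow> L u \<inter> L v = {}"
proof (rule ccontr)
  assume a: "A \<in> P" "card A = 2" "u \<in> A" "v \<in> A" "u \<noteq> v" "L u \<inter> L v \<noteq> {}"
  then obtain c where c: "c \<in> L u" "c \<in> L v" by blast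
  have "A = {u, v}"
  proof -
    have "{u, v} \<subseteq> A" using a by auto
    moreover have "card {u, v} = 2" using a(5) by simp
    moreover have "finite A" using a(2) card_gt_0_iff by fastforce
    ultimately show ?thesis using a(2) card_subset_eq[of A "{u,v}"] by simp
  qed
  then have h1: "\<forall>w\<in>A. c \<in> L w" using c by blast
  have h2: "A \<noteq> {}" using a(3) by blast
  show False by (rule red[OF a(1) subset_refl h2 h1]) (simp add: a(2))
qed

lemma n_sum: "n = (\<Sum>B\<in>P. card B)"
proof -
  have "card (\<Union>P) = sum card P"
  proof (rule card_Union_disjoint)
    show "pairwise disjnt P" using cm(3) unfolding pairwise_def disjnt_def by blast
    show "\<And>A. A \<in> P \<Longrightarrow> finite A" using cm(1) cm(5) finite_subset by blast
  qed
  then show ?thesis using cm(2) n_def by simp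
qed

lemma sum_lists: "A \<in> P \<Longrightarrow> (\<Sum>v\<in>A. card (L v)) \<le> 2 * card (\<Union>v\<in>A. L v)"
proof -
  assume A: "A \<in> P"
  define U where "U = (\<Union>v\<in>A. L v)"
  have AV: "A \<subseteq> V" using cm(5) A by blast
  have fA: "finite A" using AV cm(1) finite_subset by blast
  have fU: "finite U" unfolding U_def using fA AV finL by blast
  have eq1: "card (L v) = (\<Sum>c\<in>U. if c \<in> L v then 1 else 0)" if v: "v \<in> A" for v
  proof -
    have "(\<Sum>c\<in>U. if c \<in> L v then 1 else 0) = card (U \<inter> {c. c \<in> L v})"
      using fU by (simp add: sum.If_cases)
    also have "U \<inter> {c. c \<in> L v} = L v" using v unfolding U_def by blast
    finally show ?thesis by simp
  qed
  have eq2: "(\<Sum>v\<in>A. if c \<in> L v then 1 else 0) = card {v\<in>A. c \<in> L v}" for c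
  proof -
    have "(\<Sum>v\<in>A. if c \<in> L v then 1 else 0) = card (A \<inter> {v. c \<in> L v})"
      using fA by (simp add: sum.If_cases)
    also have "A \<inter> {v. c \<in> L v} = {v\<in>A. c \<in> L v}" by blast
    finally show ?thesis .
  qed
  have "(\<Sum>v\<in>A. card (L v)) = (\<Sum>v\<in>A. \<Sum>c\<in>U. if c \<in> L v then 1 else (0::nat))"
    using eq1 by (rule sum.cong[OF refl])
  also have "\<dots> = (\<Sum>c\<in>U. \<Sum>v\<in>A. if c \<in> L v then 1 else (0::nat))" by (rule sum.swap)
  also have "\<dots> = (\<Sum>c\<in>U. card {v\<in>A. c \<in> L v})" using eq2 by simp
  also have "\<dots> \<le> (\<Sum>c\<in>U. 2)" using color_le2[OF A] by (intro sum_mono) auto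
  also have "\<dots> = 2 * card U" by simp
  finally show ?thesis unfolding U_def .
qed

lemma part_bound: "A \<in> P \<Longrightarrow> card A * (n + k) \<le> 6 * (n - 1) + card A"
proof -
  assume A: "A \<in> P"
  have AV: "A \<subseteq> V" using cm(5) A by blast
  have "(\<Sum>v\<in>A. n + k) \<le> (\<Sum>v\<in>A. 3 * card (L v) + 1)"
    using list3 AV by (intro sum_mono) auto
  also have "\<dots> = (\<Sum>v\<in>A. 3 * card (L v)) + (\<Sum>v\<in>A. 1)" by (rule sum.distrib)
  also have "\<dots> = 3 * (\<Sum>v\<in>A. card (L v)) + card A" by (simp add: sum_distrib_left)
  also have "\<dots> \<le> 3 * (2 * card (\<Union>v\<in>A. L v)) + card A" using sum_lists[OF A] by simp
  also have "card (\<Union>v\<in>A. L v) \<le> card (\<Union>v\<in>V. L v)" using AV finC by (intro card_mono) auto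
  then have "3 * (2 * card (\<Union>v\<in>A. L v)) + card A \<le> 6 * (n - 1) + card A" using few_colors by simp
  finally show ?thesis by simp
qed

lemma part_le5: "A \<in> P \<Longrightarrow> card A \<le> 5"
proof (rule ccontr)
  assume A: "A \<in> P" "\<not> card A \<le> 5"
  have "card A * (n + k) \<le> 6 * (n - 1) + card A" using part_bound[OF A(1)] .
  moreover have "card A * (n + k) = card A * (n + k - 1) + card A"
  proof -
    have "n + k = (n + k - 1) + 1" using n_ge by simp
    then have "card A * (n + k) = card A * ((n + k - 1) + 1)" by simp
    also have "\<dots> = card A * (n + k - 1) + card A" by (simp add: distrib_left)
    finally show ?thesis .
  qed
  ultimately have "card A * (n + k - 1) \<le> 6 * (n - 1)" by linarith
  moreover have "6 * (n - 1) + 6 = 6 * n" "n + k - 1 + 1 = n + k" using n_ge by simp_all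
  moreover have "6 * (n + k - 1) \<le> card A * (n + k - 1)" using A(2) by (intro mult_le_mono1) simp
  ultimately show False using k_pos n_ge by linarith
qed

lemma part_le4: "A \<in> P \<Longrightarrow> card A \<le> 4"
proof (rule ccontr)
  assume A: "A \<in> P" "\<not> card A \<le> 4"
  then have c5: "card A = 5" using part_le5 by fastforce
  have "5 * (n + k) \<le> 6 * (n - 1) + 5" using part_bound[OF A(1)] c5 by simp
  moreover have "n \<le> 5 * k"
  proof -
    have "(\<Sum>B\<in>P. card B) \<le> (\<Sum>B\<in>P. 5)" using part_le5 by (intro sum_mono) auto
    then show ?thesis using n_sum k_parts by simp
  qed
  moreover have "6 * (n - 1) + 6 = 6 * n" "5 * (n + k) = 5 * n + 5 * k" using n_ge by simp_all
  ultimately show False using n_ge by linarith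
qed

end



locale L18 = Hyp V E P L k n
  for V :: "'v set" and E :: "'v \<Rightarrow> 'v \<Rightarrow> bool" and P :: "'v set set"
    and L :: "'v \<Rightarrow> 'c set" and k n :: nat +
  fixes M :: "'v set set"
  assumes M: "merging P M"
begin

abbreviation "Vs \<equiv> merged_vertices V M"
abbreviation "lst \<equiv> merged_list L"
abbreviation "pstar A \<equiv> part_star V M A"

lemma Mp: "p \<in> M \<Longrightarrow> card p = 2 \<and> (\<exists>A\<in>P. p \<subseteq> A)"
  using M unfolding merging_def by blast

lemma Mdisj: "p \<in> M \<Longrightarrow> q \<in> M \<Longrightarrow> p \<noteq> q \<Longrightarrow> p \<inter> q = {}"
  using M unfolding merging_def by blast

lemma MV: "p \<in> M \<Longrightarrow> p \<subseteq> V"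
  using Mp cm(5) by blast

lemma finM: "finite M"
proof -
  have "M \<subseteq> Pow V" using MV by blast
  then show ?thesis using cm(1) finite_subset by blast
qed

lemma Vs_cases: "x \<in> Vs \<Longrightarrow> x \<in> M \<or> (\<exists>v. x = {v} \<and> v \<in> V \<and> v \<notin> \<Union>M)"
  unfolding merged_vertices_def by blast

lemma Vs_part: "x \<in> Vs \<Longrightarrow> x \<noteq> {} \<and> (\<exists>A\<in>P. x \<subseteq> A)"
proof -
  assume x: "x \<in> Vs"
  show ?thesis
  proof (cases "x \<in> M")
    case True
    then have "card x = 2" "\<exists>A\<in>P. x \<subseteq> A" using Mp by auto
    then show ?thesis by auto
  next
    case False
    then obtain v where v: "x = {v}" "v \<in> V" using Vs_cases[OF x] by blast
    then obtain A where "A \<in> P" "v \<in> A" using cm(2) by blast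
    then show ?thesis using v by blast
  qed
qed

lemma Vs_disj: "x \<in> Vs \<Longrightarrow> y \<in> Vs \<Longrightarrow> x \<noteq> y \<Longrightarrow> x \<inter> y = {}"
proof -
  assume a: "x \<in> Vs" "y \<in> Vs" "x \<noteq> y"
  show ?thesis
  proof (cases "x \<in> M")
    case xM: True
    show ?thesis
    proof (cases "y \<in> M")
      case True then show ?thesis using Mdisj[OF xM True a(3)] by simp
    next
      case False
      then obtain v where v: "y = {v}" "v \<notin> \<Union>M" using Vs_cases[OF a(2)] by blast
      then have "v \<notin> x" using xM by blast
      then show ?thesis using v(1) by simp
    qed
  next
    case xM: False
    then obtain v where v: "x = {v}" "v \<notin> \<Union>M" using Vs_cases[OF a(1)] by blast
    show ?thesis
    proof (cases "y \<in> M")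
      case True
      then have "v \<notin> y" using v by blast
      then show ?thesis using v(1) by simp
    next
      case False
      then obtain w where w: "y = {w}" using Vs_cases[OF a(2)] by blast
      then show ?thesis using v(1) a(3) by simp
    qed
  qed
qed

lemma Vs_sub: "x \<in> Vs \<Longrightarrow> x \<subseteq> V"
  using Vs_part cm(5) by blast

lemma finVs: "finite Vs"
proof -
  have "Vs \<subseteq> Pow V" using Vs_sub by blast
  then show ?thesis using cm(1) finite_subset by blast
qed

lemma card_Vs: "card Vs + card M = n"
proof -
  define S1 where "S1 = (\<lambda>v. {v}) ` (V - \<Union>M)"
  have eq: "Vs = M \<union> S1" unfolding merged_vertices_def S1_def by blast
  have dis: "M \<inter> S1 = {}"
  proof -
    have "\<And>x. x \<in> S1 \<Longrightarrow> card x = 1" unfolding S1_def by auto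
    then show ?thesis using Mp by fastforce
  qed
  have fS1: "finite S1" unfolding S1_def using cm(1) by blast
  have cS1: "card S1 = card (V - \<Union>M)" unfolding S1_def by (rule card_image) (simp add: inj_on_def)
  have UMV: "\<Union>M \<subseteq> V" using MV by blast
  have cU: "card (\<Union>M) = sum card M"
  proof (rule card_Union_disjoint)
    show "pairwise disjnt M" using Mdisj unfolding pairwise_def disjnt_def by blast
    show "\<And>A. A \<in> M \<Longrightarrow> finite A" using MV cm(1) finite_subset by blast
  qed
  also have "\<dots> = (\<Sum>p\<in>M. 2)" using Mp by (intro sum.cong) auto
  finally have cU2: "card (\<Union>M) = 2 * card M" by simp
  have "card (V - \<Union>M) = n - card (\<Union>M)" using UMV cm(1) n_def by (simp add: card_Diff_subset finite_subset)
  moreover have "card (\<Union>M) \<le> n" using UMV cm(1) n_def card_mono by blast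
  moreover have "card Vs = card M + card S1" using eq dis finM fS1 by (simp add: card_Un_disjoint)
  ultimately show ?thesis using cS1 cU2 by linarith
qed

lemma lst_single: "lst {v} = L v" unfolding merged_list_def by simp

lemma lst_sub: "x \<in> Vs \<Longrightarrow> lst x \<subseteq> (\<Union>v\<in>V. L v)"
proof -
  assume x: "x \<in> Vs"
  then obtain v where "v \<in> x" using Vs_part by blast
  then have "lst x \<subseteq> L v" "v \<in> V" using Vs_sub x unfolding merged_list_def by auto
  then show ?thesis by blast
qed

lemma pstar_uniq: "x \<in> pstar A \<Longrightarrow> x \<in> pstar B \<Longrightarrow> A \<in> P \<Longrightarrow> B \<in> P \<Longrightarrow> A = B"
proof (rule ccontr)
  assume a: "x \<in> pstar A" "x \<in> pstar B" "A \<in> P" "B \<in> P" "A \<noteq> B"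
  then have "x \<subseteq> A \<inter> B" "x \<in> Vs" unfolding part_star_def by auto
  moreover have "A \<inter> B = {}" using cm(3) a by blast
  ultimately show False using Vs_part by blast
qed

lemma pstar_cover: "x \<in> Vs \<Longrightarrow> \<exists>A\<in>P. x \<in> pstar A"
  using Vs_part unfolding part_star_def by blast

lemma card_M: "card {A \<in> P. card A = 3 \<and> (\<exists>p\<in>M. p \<subseteq> A)} + num_parts P 4 \<le> card M"
  if P2: "\<forall>A\<in>P. card A = 4 \<longrightarrow> (\<exists>p\<in>M. p \<subseteq> A)"
proof -
  define Q3 where "Q3 = {A \<in> P. card A = 3 \<and> (\<exists>p\<in>M. p \<subseteq> A)}"
  define Q4 where "Q4 = {A \<in> P. card A = 4}"
  define Q where "Q = Q3 \<union> Q4"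
  have hasp: "A \<in> Q \<Longrightarrow> \<exists>p. p \<in> M \<and> p \<subseteq> A" for A using P2 unfolding Q_def Q3_def Q4_def by blast
  define \<phi> where "\<phi> A = (SOME p. p \<in> M \<and> p \<subseteq> A)" for A
  have phi: "A \<in> Q \<Longrightarrow> \<phi> A \<in> M \<and> \<phi> A \<subseteq> A" for A unfolding \<phi>_def using hasp by (rule someI_ex)
  have QP: "Q \<subseteq> P" unfolding Q_def Q3_def Q4_def by blast
  have inj: "inj_on \<phi> Q"
    unfolding inj_on_def
  proof (intro ballI impI)
    fix A B assume ab: "A \<in> Q" "B \<in> Q" "\<phi> A = \<phi> B"
    have "card (\<phi> A) = 2" using phi[OF ab(1)] Mp by blast
    then have "\<phi> A \<noteq> {}" by auto
    moreover have "\<phi> A \<subseteq> A \<inter> B" using phi ab by auto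
    ultimately show "A = B" using cm(3) QP ab by blast
  qed
  have "card Q \<le> card M"
  proof -
    have "card Q = card (\<phi> ` Q)" using inj by (simp add: card_image)
    also have "\<dots> \<le> card M" using phi finM by (intro card_mono) auto
    finally show ?thesis .
  qed
  moreover have "card Q = card Q3 + card Q4"
    unfolding Q_def using cm(6) by (intro card_Un_disjoint) (auto simp: Q3_def Q4_def)
  ultimately show ?thesis unfolding Q3_def Q4_def num_parts_def by simp
qed

end



lemma three_elems:
  assumes "finite X" "card X \<ge> 3"
  shows "\<exists>x y z. x \<in> X \<and> y \<in> X \<and> z \<in> X \<and> x \<noteq> y \<and> x \<noteq> z \<and> y \<noteq> z"
proof -
  have "X \<noteq> {}" using assms(2) by (intro notI) simp
  then obtain x where x: "x \<in> X" by blast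
  have c1: "card (X - {x}) \<ge> 2" using assms x by (simp add: card_Diff_singleton)
  have "X - {x} \<noteq> {}" using c1 by (intro notI) simp
  then obtain y where y: "y \<in> X - {x}" by blast
  have "card (X - {x} - {y}) \<ge> 1" using c1 y assms by (simp add: card_Diff_singleton)
  then have "X - {x} - {y} \<noteq> {}" by (intro notI) simp
  then obtain z where z: "z \<in> X - {x} - {y}" by blast
  show ?thesis using x y z by blast
qed

context Hyp
begin

lemma ind_sum: "(\<Sum>B\<in>P. if card B = i then 1 else 0) = int (num_parts P i)"
proof -
  have "(\<Sum>B\<in>P. if card B = i then 1 else (0::int)) = int (card (P \<inter> {B. card B = i}))"
    using cm(6) by (simp add: sum.If_cases)
  also have "P \<inter> {B. card B = i} = {B \<in> P. card B = i}" by blast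
  finally show ?thesis unfolding num_parts_def by simp
qed

lemma n_lower: "int n \<ge> 2 * int k - int (num_parts P 1) + int (num_parts P 3) + 2 * int (num_parts P 4)"
proof -
  define f where "f B = 2 - (if card B = 1 then 1 else 0) + (if card B = 3 then 1 else 0) + 2 * (if card B = 4 then 1 else (0::int))" for B :: "'v set"
  have "int n = (\<Sum>B\<in>P. int (card B))" using n_sum by simp
  also have "\<dots> \<ge> (\<Sum>B\<in>P. f B)"
  proof (rule sum_mono)
    fix B assume B: "B \<in> P"
    have "B \<noteq> {}" using B cm(4) by blast
    moreover have "finite B" using B cm(5) cm(1) finite_subset by blast
    ultimately have "card B \<ge> 1" by (simp add: Suc_leI card_gt_0_iff)
    then show "f B \<le> int (card B)" unfolding f_def by auto
  qed
  finally have "int n \<ge> (\<Sum>B\<in>P. f B)" .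
  moreover have "(\<Sum>B\<in>P. f B) = 2 * int k - int (num_parts P 1) + int (num_parts P 3) + 2 * int (num_parts P 4)"
    unfolding f_def using ind_sum k_parts
    by (simp add: sum.distrib sum_subtractf sum_distrib_left[symmetric])
  ultimately show ?thesis by simp
qed

end

locale L18b = L18 V E P L k n M
  for V :: "'v set" and E :: "'v \<Rightarrow> 'v \<Rightarrow> bool" and P :: "'v set set"
    and L :: "'v \<Rightarrow> 'c set" and k n :: nat and M +
  fixes Z3 Z4 :: "'v set set"
  assumes Z3: "Z3 \<subseteq> {A \<in> P. card A = 3}" "card Z3 = (2 * num_parts P 3) div 3"
    and Z4: "Z4 \<subseteq> {A \<in> P. card A = 4}"
        "3 * int (card Z4) = max 0 (int (num_parts P 1) - int (num_parts P 3) + int (num_parts P 4) + 1)"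
    and P2: "\<forall>A\<in>P. card A = 4 \<longrightarrow> (\<exists>p\<in>M. p \<subseteq> A)"
    and P3: "\<forall>A\<in>P. \<forall>x\<in>part_star V M A. \<forall>y\<in>part_star V M A. \<forall>z\<in>part_star V M A.
        x \<noteq> y \<and> x \<noteq> z \<and> y \<noteq> z \<longrightarrow>
        int (card (merged_list L x \<union> merged_list L y \<union> merged_list L z))
          \<ge> int n - int (card {A \<in> P. card A = 3 \<and> (\<exists>p\<in>M. p \<subseteq> A)}) - int (num_parts P 4)"
    and P4: "\<forall>A\<in>P. card A = 3 \<and> \<not> (\<exists>p\<in>M. p \<subseteq> A) \<longrightarrow>
        (\<forall>x\<in>part_star V M A. \<forall>y\<in>part_star V M A. x \<noteq> y \<longrightarrow>
          card (merged_list L x \<union> merged_list L y) \<ge> k + num_parts P 3 + num_parts P 4)"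
    and P5: "\<forall>A\<in>Z3. \<forall>x\<in>part_star V M A. \<forall>y\<in>part_star V M A. x \<noteq> y \<longrightarrow>
        card (merged_list L x \<union> merged_list L y)
          \<ge> k + card {A \<in> P. card A = 3 \<and> (\<exists>p\<in>M. p \<subseteq> A)} + num_parts P 4"
    and P6: "\<forall>A\<in>P. card A = 3 \<longrightarrow>
        (\<forall>x\<in>part_star V M A. \<forall>y\<in>part_star V M A. x \<noteq> y \<longrightarrow>
          real (card (merged_list L x \<union> merged_list L y))
            \<ge> real k + real (num_parts P 3) / 3 + real (num_parts P 4))"
    and P7: "\<forall>A\<in>Z4. \<forall>x\<in>part_star V M A. \<forall>y\<in>part_star V M A. x \<noteq> y \<longrightarrow>
        card (merged_list L x \<union> merged_list L y) \<ge> k + num_parts P 4"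
    and P8: "has_SDR M (merged_list L)"
begin

lemma hall_J:
  assumes J: "J \<subseteq> Vs"
  shows "card J \<le> card (\<Union>(lst ` J))"
proof -
  define U where "U = \<Union>(lst ` J)"
  define t3 where "t3 = card {A \<in> P. card A = 3 \<and> (\<exists>p\<in>M. p \<subseteq> A)}"
  have fJ: "finite J" using J finVs finite_subset by blast
  have fU: "finite U" unfolding U_def using lst_sub J finC finite_subset
    by (metis (no_types, lifting) UN_least subset_eq)
  have Usub: "x \<in> J \<Longrightarrow> lst x \<subseteq> U" for x unfolding U_def by blast
  have Ucard: "x \<in> J \<Longrightarrow> y \<in> J \<Longrightarrow> card (lst x \<union> lst y) \<le> card U" for x y
    using Usub fU by (intro card_mono) auto
  show ?thesis
  proof (cases "\<exists>A\<in>P. \<exists>x y z. x \<in> J \<and> y \<in> J \<and> z \<in> J \<and> x \<in> pstar A \<and> y \<in> pstar A \<and> z \<in> pstar A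
      \<and> x \<noteq> y \<and> x \<noteq> z \<and> y \<noteq> z")
    case True
    then obtain A x y z where a: "A \<in> P" "x \<in> J" "y \<in> J" "z \<in> J" "x \<in> pstar A" "y \<in> pstar A"
      "z \<in> pstar A" "x \<noteq> y" "x \<noteq> z" "y \<noteq> z" by blast
    have "int (card (lst x \<union> lst y \<union> lst z)) \<ge> int n - int t3 - int (num_parts P 4)"
      using P3 a unfolding t3_def by blast
    moreover have "card (lst x \<union> lst y \<union> lst z) \<le> card U"
      using Usub a fU by (intro card_mono) auto
    moreover have "card J \<le> card Vs" using J finVs card_mono by blast
    moreover have "t3 + num_parts P 4 \<le> card M" using card_M[OF P2] unfolding t3_def .
    ultimately show ?thesis using card_Vs unfolding U_def by linarith
  next
    case not3: False
    show ?thesis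
    proof (cases "J \<subseteq> M")
      case True
      obtain f where f: "inj_on f M" "\<forall>i\<in>M. f i \<in> lst i" using P8 unfolding has_SDR_def by blast
      have "card J = card (f ` J)" using f(1) True by (metis card_image inj_on_subset)
      also have "\<dots> \<le> card U" using f(2) True fU unfolding U_def by (intro card_mono) auto
      finally show ?thesis unfolding U_def .
    next
      case False
      then obtain x0 where x0: "x0 \<in> J" "x0 \<notin> M" by blast
      then obtain v0 where v0: "x0 = {v0}" "v0 \<in> V" using Vs_cases J by blast
      have Lv0: "card (L v0) \<le> card U" using Usub[OF x0(1)] v0 fU lst_single by (metis card_mono)
      have Lv03: "n + k \<le> 3 * card (L v0) + 1" using list3 v0(2) .
      have le2: "card (J \<inter> pstar A) \<le> 2" if A: "A \<in> P" for A
      proof (rule ccontr)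
        assume "\<not> card (J \<inter> pstar A) \<le> 2"
        then have "card (J \<inter> pstar A) \<ge> 3" by simp
        then obtain x y z where "x \<in> J \<inter> pstar A" "y \<in> J \<inter> pstar A" "z \<in> J \<inter> pstar A"
          "x \<noteq> y" "x \<noteq> z" "y \<noteq> z" using three_elems[of "J \<inter> pstar A"] fJ by blast
        then show False using not3 A by blast
      qed
      have Jeq: "J = (\<Union>A\<in>P. J \<inter> pstar A)" using J pstar_cover by blast
      have cardJ: "card J = (\<Sum>A\<in>P. card (J \<inter> pstar A))"
      proof -
        have "card (\<Union>A\<in>P. J \<inter> pstar A) = (\<Sum>A\<in>P. card (J \<inter> pstar A))"
        proof (rule card_UN_disjoint)
          show "finite P" by (rule cm(6))
          show "\<forall>A\<in>P. finite (J \<inter> pstar A)" using fJ by blast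
          show "\<forall>A\<in>P. \<forall>B\<in>P. A \<noteq> B \<longrightarrow> J \<inter> pstar A \<inter> (J \<inter> pstar B) = {}"
            using pstar_uniq by blast
        qed
        then show ?thesis using Jeq by simp
      qed
      define D where "D = {A \<in> P. card (J \<inter> pstar A) = 2}"
      have DP: "D \<subseteq> P" unfolding D_def by blast
      have JkD: "card J \<le> k + card D"
      proof -
        have "card J \<le> (\<Sum>A\<in>P. 1 + (if A \<in> D then 1 else 0))"
          unfolding cardJ
        proof (rule sum_mono)
          fix A assume "A \<in> P"
          then show "card (J \<inter> pstar A) \<le> 1 + (if A \<in> D then 1 else 0)"
            using le2 unfolding D_def by force
        qed
        also have "\<dots> = (\<Sum>A\<in>P. 1) + (\<Sum>A\<in>P. if A \<in> D then 1 else 0)" by (rule sum.distrib)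
        also have "\<dots> = card P + (\<Sum>A\<in>P. if A \<in> D then 1 else 0)" by simp
        also have "(\<Sum>A\<in>P. if A \<in> D then 1 else 0) = card (P \<inter> {A. A \<in> D})"
          using cm(6) by (simp add: sum.If_cases)
        also have "P \<inter> {A. A \<in> D} = D" using DP by blast
        finally show ?thesis using k_parts by simp
      qed
      have J2k: "card J \<le> 2 * k"
      proof -
        have "card J \<le> (\<Sum>A\<in>P. 2)" unfolding cardJ using le2 by (intro sum_mono) auto
        then show ?thesis using k_parts by simp
      qed
      have pairD: "\<exists>x y. x \<in> J \<and> y \<in> J \<and> x \<in> pstar A \<and> y \<in> pstar A \<and> x \<noteq> y" if A: "A \<in> D" for A
      proof -
        have "card (J \<inter> pstar A) = 2" using A unfolding D_def by blast
        then obtain x y where "J \<inter> pstar A = {x, y}" "x \<noteq> y" by (meson card_2_iff)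
        then show ?thesis by blast
      qed
      have pstarsub: "x \<in> pstar A \<Longrightarrow> x \<subseteq> A \<and> x \<in> Vs" for x A unfolding part_star_def by blast
      have sizeD: "card A \<ge> 2" if A: "A \<in> D" for A
      proof -
        obtain x y where xy: "x \<in> J" "y \<in> J" "x \<in> pstar A" "y \<in> pstar A" "x \<noteq> y" using pairD A by blast
        have d: "x \<inter> y = {}" using Vs_disj xy pstarsub by blast
        have fA: "finite A" using A DP cm(5) cm(1) finite_subset by blast
        have sub: "x \<union> y \<subseteq> A" using xy pstarsub by blast
        have fx: "finite x" "finite y" using sub fA finite_subset by auto
        have ne: "x \<noteq> {}" "y \<noteq> {}" using xy pstarsub Vs_part by blast+
        have "card (x \<union> y) = card x + card y" using d fx by (simp add: card_Un_disjoint)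
        moreover have "card x \<ge> 1" "card y \<ge> 1" using ne fx by (simp_all add: Suc_leI card_gt_0_iff)
        moreover have "card (x \<union> y) \<le> card A" using sub fA card_mono by blast
        ultimately show ?thesis by linarith
      qed
      define S3 where "S3 = {A \<in> P. card A = 3}"
      define S4 where "S4 = {A \<in> P. card A = 4}"
      define Q3 where "Q3 = {A \<in> P. card A = 3 \<and> (\<exists>p\<in>M. p \<subseteq> A)}"
      have fP: "finite P" by (rule cm(6))
      have cS3: "card S3 = num_parts P 3" unfolding S3_def num_parts_def ..
      have cS4: "card S4 = num_parts P 4" unfolding S4_def num_parts_def ..
      have cQ3: "card Q3 = t3" unfolding Q3_def t3_def ..
      have fS: "finite S3" "finite S4" "finite Q3" using fP unfolding S3_def S4_def Q3_def by auto
      show ?thesis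
      proof (cases "\<exists>A\<in>D. card A = 2")
        case True
        then obtain A where A: "A \<in> D" "card A = 2" by blast
        obtain x y where xy: "x \<in> J" "y \<in> J" "x \<in> pstar A" "y \<in> pstar A" "x \<noteq> y" using pairD A(1) by blast
        have d: "x \<inter> y = {}" using Vs_disj xy pstarsub by blast
        have fA: "finite A" using A(1) DP cm(5) cm(1) finite_subset by blast
        have sub: "x \<union> y \<subseteq> A" using xy pstarsub by blast
        have fx: "finite x" "finite y" using sub fA finite_subset by auto
        have ne: "x \<noteq> {}" "y \<noteq> {}" using xy pstarsub Vs_part by blast+
        have "card (x \<union> y) = card x + card y" using d fx by (simp add: card_Un_disjoint)
        moreover have "card x \<ge> 1" "card y \<ge> 1" using ne fx by (simp_all add: Suc_leI card_gt_0_iff)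
        moreover have "card (x \<union> y) \<le> card A" using sub fA card_mono by blast
        ultimately have c1: "card x = 1" "card y = 1" using A(2) by linarith+
        have xM: "x \<notin> M" using c1(1) Mp by (metis numeral_eq_one_iff semiring_norm(85))
        have yM: "y \<notin> M" using c1(2) Mp by (metis numeral_eq_one_iff semiring_norm(85))
        have xVs: "x \<in> Vs" "y \<in> Vs" using xy(3,4) pstarsub by auto
        obtain u where u: "x = {u}" "u \<in> V" using Vs_cases[OF xVs(1)] xM by blast
        obtain w where w: "y = {w}" "w \<in> V" using Vs_cases[OF xVs(2)] yM by blast
        note uw = u(1) w(1) u(2) w(2)
        have uA: "u \<in> A" "w \<in> A" using uw sub by auto
        have uwne: "u \<noteq> w" using uw xy(5) by auto
        have AP: "A \<in> P" using A(1) DP by blast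
        have dj: "L u \<inter> L w = {}" using size2_disj[OF AP A(2) uA uwne] .
        have "card (L u \<union> L w) = card (L u) + card (L w)"
          using dj finL[OF u(2)] finL[OF w(2)] by (simp add: card_Un_disjoint)
        moreover have "n + k \<le> 3 * card (L u) + 1" "n + k \<le> 3 * card (L w) + 1" using list3 uw by auto
        moreover have "card (lst x \<union> lst y) \<le> card U" using Ucard xy by blast
        ultimately have "2 * k + 1 \<le> card U" using uw lst_single n_ge by simp
        then show ?thesis using J2k unfolding U_def by linarith
      next
        case no2: False
        have D34: "A \<in> D \<Longrightarrow> card A = 3 \<or> card A = 4" for A
          using sizeD no2 part_le4 DP by fastforce
        show ?thesis
        proof (cases "\<exists>A\<in>D. card A = 3 \<and> \<not> (\<exists>p\<in>M. p \<subseteq> A)")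
          case True
          then obtain A where A: "A \<in> D" "card A = 3" "\<not> (\<exists>p\<in>M. p \<subseteq> A)" by blast
          obtain x y where xy: "x \<in> J" "y \<in> J" "x \<in> pstar A" "y \<in> pstar A" "x \<noteq> y" using pairD A(1) by blast
          have "card (lst x \<union> lst y) \<ge> k + num_parts P 3 + num_parts P 4" using P4 A DP xy by blast
          moreover have "card D \<le> num_parts P 3 + num_parts P 4"
          proof -
            have "D \<subseteq> S3 \<union> S4" using D34 DP unfolding S3_def S4_def by blast
            then have "card D \<le> card (S3 \<union> S4)" using fS by (intro card_mono) auto
            also have "\<dots> \<le> card S3 + card S4" by (rule card_Un_le)
            finally show ?thesis using cS3 cS4 by simp
          qed
          ultimately show ?thesis using Ucard xy JkD unfolding U_def by fastforce
        next
          case no3u: False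
          show ?thesis
          proof (cases "\<exists>A\<in>D. A \<in> Z3")
            case True
            then obtain A where A: "A \<in> D" "A \<in> Z3" by blast
            obtain x y where xy: "x \<in> J" "y \<in> J" "x \<in> pstar A" "y \<in> pstar A" "x \<noteq> y" using pairD A(1) by blast
            have "card (lst x \<union> lst y) \<ge> k + t3 + num_parts P 4" using P5 A xy unfolding t3_def by blast
            moreover have "card D \<le> t3 + num_parts P 4"
            proof -
              have "D \<subseteq> Q3 \<union> S4" using D34 DP no3u unfolding Q3_def S4_def by blast
              then have "card D \<le> card (Q3 \<union> S4)" using fS by (intro card_mono) auto
              also have "\<dots> \<le> card Q3 + card S4" by (rule card_Un_le)
              finally show ?thesis using cQ3 cS4 by simp
            qed
            ultimately show ?thesis using Ucard xy JkD unfolding U_def by fastforce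
          next
            case noZ3: False
            show ?thesis
            proof (cases "\<exists>A\<in>D. card A = 3")
              case True
              then obtain A where A: "A \<in> D" "card A = 3" by blast
              obtain x y where xy: "x \<in> J" "y \<in> J" "x \<in> pstar A" "y \<in> pstar A" "x \<noteq> y" using pairD A(1) by blast
              have r: "real (card (lst x \<union> lst y)) \<ge> real k + real (num_parts P 3) / 3 + real (num_parts P 4)"
                using P6 A DP xy by blast
              have "card D \<le> (num_parts P 3 - card Z3) + num_parts P 4"
              proof -
                have "D \<subseteq> (S3 - Z3) \<union> S4" using D34 DP noZ3 unfolding S3_def S4_def by blast
                then have "card D \<le> card ((S3 - Z3) \<union> S4)" using fS by (intro card_mono) auto
                also have "\<dots> \<le> card (S3 - Z3) + card S4" by (rule card_Un_le)
                also have "card (S3 - Z3) = card S3 - card Z3"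
                  using Z3(1) fS unfolding S3_def by (simp add: card_Diff_subset finite_subset)
                finally show ?thesis using cS3 cS4 by simp
              qed
              moreover have "3 * (num_parts P 3 - card Z3) \<le> num_parts P 3 + 2"
                using Z3(2) by linarith
              ultimately have "real (card D) \<le> real (num_parts P 3) / 3 + 2 / 3 + real (num_parts P 4)"
                by linarith
              then have "real (card D + k) < real (card (lst x \<union> lst y)) + 1" using r by simp
              then have "card D + k \<le> card (lst x \<union> lst y)" by linarith
              then show ?thesis using Ucard xy JkD unfolding U_def by fastforce
            next
              case no3: False
              have D4: "A \<in> D \<Longrightarrow> A \<in> S4" for A using D34 no3 DP unfolding S4_def by blast
              show ?thesis
              proof (cases "\<exists>A\<in>D. A \<in> Z4")
                case True
                then obtain A where A: "A \<in> D" "A \<in> Z4" by blast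
                obtain x y where xy: "x \<in> J" "y \<in> J" "x \<in> pstar A" "y \<in> pstar A" "x \<noteq> y" using pairD A(1) by blast
                have "card (lst x \<union> lst y) \<ge> k + num_parts P 4" using P7 A xy by blast
                moreover have "card D \<le> num_parts P 4"
                proof -
                  have "D \<subseteq> S4" using D4 by blast
                  then show ?thesis using fS(2) cS4 card_mono[of S4 D] by simp
                qed
                ultimately show ?thesis using Ucard xy JkD unfolding U_def by fastforce
              next
                case noZ4: False
                have "card D \<le> num_parts P 4 - card Z4"
                proof -
                  have "D \<subseteq> S4 - Z4" using D4 noZ4 by blast
                  then have "card D \<le> card (S4 - Z4)" using fS by (intro card_mono) auto
                  also have "card (S4 - Z4) = card S4 - card Z4"
                    using Z4(1) fS unfolding S4_def by (simp add: card_Diff_subset finite_subset)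
                  finally show ?thesis using cS4 by simp
                qed
                moreover have "card Z4 \<le> num_parts P 4"
                  using Z4(1) fS(2) cS4 card_mono[of S4 Z4] unfolding S4_def by simp
                moreover have "3 * int (card Z4) \<ge> int (num_parts P 1) - int (num_parts P 3) + int (num_parts P 4) + 1"
                  using Z4(2) by linarith
                moreover note n_lower
                ultimately have "int (card J) \<le> int (card (L v0))" using JkD Lv03 by linarith
                then show ?thesis using Lv0 unfolding U_def by linarith
              qed
            qed
          qed
        qed
      qed
    qed
  qed
qed

end

lemma (in L18b) SDR: "has_SDR Vs lst"
proof -
  have "\<forall>x\<in>Vs. finite (lst x)" using lst_sub finC finite_subset by blast
  then show ?thesis unfolding has_SDR_def using hall[OF finVs] hall_J by blast
qed

theorem lemma18:
  fixes V :: "'v set" and E :: "'v \<Rightarrow> 'v \<Rightarrow> bool" and P :: "'v set set"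
    and L :: "'v \<Rightarrow> 'c set" and k n :: nat
    and Z3 Z4 M :: "'v set set"
  assumes k_pos: "k \<ge> 1"
    and n_ge: "n \<ge> 2 * k + 2"
    and G: "complete_multipartite V E P"
    and k_parts: "card P = k"
    and n_def: "card V = n"
    and list_size: "\<forall>v\<in>V. int (card (L v)) \<ge> ceiling ((real n + real k - 1) / 3)"
    and no_col: "\<not> (\<exists>f. L_coloring V E L f)"
    and few_colors: "card (\<Union>v\<in>V. L v) \<le> n - 1"
    and minimal: "\<forall>(W :: nat set) (F :: nat \<Rightarrow> nat \<Rightarrow> bool).
        simple_graph W F \<and> card W < n \<longrightarrow>
        int (choice_number W F) \<le> max (int (chromatic_number W F))
          (ceiling ((real (card W) + real (chromatic_number W F) - 1) / 3))"
    and Z3: "Z3 \<subseteq> {A \<in> P. card A = 3}" "card Z3 = (2 * num_parts P 3) div 3"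
    and Z4: "Z4 \<subseteq> {A \<in> P. card A = 4}"
        "3 * int (card Z4) = max 0 (int (num_parts P 1) - int (num_parts P 3) + int (num_parts P 4) + 1)"
    and M: "merging P M"
    and P1: "3 * card {A \<in> P. card A = 3 \<and> (\<exists>p\<in>M. p \<subseteq> A)} \<ge> num_parts P 3"
    and P2: "\<forall>A\<in>P. card A = 4 \<longrightarrow> (\<exists>p\<in>M. p \<subseteq> A)"
    and P3: "\<forall>A\<in>P. \<forall>x\<in>part_star V M A. \<forall>y\<in>part_star V M A. \<forall>z\<in>part_star V M A.
        x \<noteq> y \<and> x \<noteq> z \<and> y \<noteq> z \<longrightarrow>
        int (card (merged_list L x \<union> merged_list L y \<union> merged_list L z))
          \<ge> int n - int (card {A \<in> P. card A = 3 \<and> (\<exists>p\<in>M. p \<subseteq> A)}) - int (num_parts P 4)"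
    and P4: "\<forall>A\<in>P. card A = 3 \<and> \<not> (\<exists>p\<in>M. p \<subseteq> A) \<longrightarrow>
        (\<forall>x\<in>part_star V M A. \<forall>y\<in>part_star V M A. x \<noteq> y \<longrightarrow>
          card (merged_list L x \<union> merged_list L y) \<ge> k + num_parts P 3 + num_parts P 4)"
    and P5: "\<forall>A\<in>Z3. \<forall>x\<in>part_star V M A. \<forall>y\<in>part_star V M A. x \<noteq> y \<longrightarrow>
        card (merged_list L x \<union> merged_list L y)
          \<ge> k + card {A \<in> P. card A = 3 \<and> (\<exists>p\<in>M. p \<subseteq> A)} + num_parts P 4"
    and P6: "\<forall>A\<in>P. card A = 3 \<longrightarrow>
        (\<forall>x\<in>part_star V M A. \<forall>y\<in>part_star V M A. x \<noteq> y \<longrightarrow>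
          real (card (merged_list L x \<union> merged_list L y))
            \<ge> real k + real (num_parts P 3) / 3 + real (num_parts P 4))"
    and P7: "\<forall>A\<in>Z4. \<forall>x\<in>part_star V M A. \<forall>y\<in>part_star V M A. x \<noteq> y \<longrightarrow>
        card (merged_list L x \<union> merged_list L y) \<ge> k + num_parts P 4"
    and P8: "has_SDR M (merged_list L)"
  shows "has_SDR (merged_vertices V M) (merged_list L)"
proof -
  interpret L18b V E P L k n M Z3 Z4
    by (unfold_locales; fact assms)
  show ?thesis by (rule SDR)
qed

end
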